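(* Let $T>0$. Let $k,B:[0,T]\to(0,\infty)$ be smooth positive functions of $t$ only, where, writing $y=t-T\in[-T,0]$, $B$ satisfies $B''=k^2B$ with $B=1$ and $B'=0$ at $y=0$ (so that $B'(t)\le 0$ on $[0,T]$), and suppose that $\ln(B^2k)$ is nondecreasing and smooth on $[0,T]$. Consider the system $$\rho_t+m_x=R(\rho,m,t):=-\rho\frac{k'}{k}+\frac{m^2-1}{\rho}BB',\qquad m_t+\Big(\frac{m^2-1}{\rho}\Big)_x=S(\rho,m,t):=-2m\Big(\frac{B'}{B}+\frac{k'}{2k}\Big),$$ with initial data $(\rho,m)(x,0)=(\rho_0,m_0)(x)$, $\rho_0>0$, and let $(\rho^l,m^l)$ be the approximate solutions given by the fractional-step Lax--Friedrichs scheme described in the context. Suppose that for some constants $\delta_0>0$, $P_0>0$ and all $x\in\mathbb{R}$, $$\delta_0\le w(x,0)\le P_0,\quad -P_0\le z(x,0)\le 0\qquad(\text{or } 0\le w(x,0)\le P_0,\quad -P_0\le z(x,0)\le -\delta_0),$$ where $w(x,0)=\frac{m_0(x)+1}{\rho_0(x)}$, $z(x,0)=\frac{m_0(x)-1}{\rho_0(x)}$. Then there exist a constant $h_0>0$ and constants $P(T),A(T)>0$ such that for all time meshes $h\le h_0$ the Riemann invariants $w^l=\frac{m^l+1}{\rho^l}$, $z^l=\frac{m^l-1}{\rho^l}$ of the approximate solutions satisfy, for all $(x,t)\in\mathbb{R}\times[0,T]$, $$\delta_0e^{-A(T)T}\le w^l(x,t)\le P(T),\quad -P(T)\le z^l(x,t)\le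 0$$ (respectively, in the second case, $0\le w^l(x,t)\le P(T)$, $-P(T)\le z^l(x,t)\le -\delta_0e^{-A(T)T}$).
   Context: Notation: $'$ denotes $d/dt$ (equivalently $d/dy$). Write $U=(\rho,m)^\top$, $f(U)=(m,(m^2-1)/\rho)^\top$, $H(U,x,t)=(R,S)^\top$. The homogeneous system $\rho_t+m_x=0$, $m_t+((m^2-1)/\rho)_x=0$ (Chaplygin gas) has eigenvalues $\lambda_1=z=\frac{m-1}{\rho}$, $\lambda_2=w=\frac{m+1}{\rho}$; it is linearly degenerate, and its Riemann problems are solved by contact discontinuities (along which $z$, resp. $w$, is constant). Scheme: let $h>0$ (time mesh) and $l>0$ (space mesh) satisfy the CFL condition $\max_{i=1,2}\lambda_i(\rho^l,m^l)<l/(2h)\le\Lambda$ for a constant $\Lambda>0$. For integers $n\ge0$ and $j$ with $n+j$ even, let $Q_{nj}=\{(x,t):(j-1)l<x<(j+1)l,\ nh\le t<(n+1)h\}$. Set $U^0_j=U_0(jl)$ where $U_0=(\rho_0,m_0)$. Given the values $U^n_j$, in $Q_{nj}$ let $U^l_R$ be the Riemann solution of the homogeneous system with initial data $U^n_{j-1}$ for $x<jl$ and $U^n_{j+1}$ for $x>jl$ at $t=nh$, and define $U^l(x,t)=U^l_R(x,t)+H(U^l_R(x,t),x,t)(t-nh)$; then set $U^{n+1}_j=\frac{1}{2l}\int_{(j-1)l}^{(j+1)l}U^l(x,(n+1)h-0)\,dx$. The resulting piecewise-defined function $U^l=(\rho^l,m^l)$ on $\mathbb{R}\times[0,T]$ is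 the approximate solution. *)

theory Defs
  imports "HOL-Analysis.Analysis"
begin

definition smooth_fun :: "(real \<Rightarrow> real) \<Rightarrow> bool" where
  "smooth_fun f \<longleftrightarrow> (\<forall>n x. ((deriv ^^ n) f) differentiable (at x))"

definition w_of :: "real \<times> real \<Rightarrow> real" where
  "w_of U = (snd U + 1) / fst U"

definition z_of :: "real \<times> real \<Rightarrow> real" where
  "z_of U = (snd U - 1) / fst U"

text \<open>Riemann solution of the homogeneous Chaplygin gas system with left state UL
  and right state UR, centred at the origin, at relative position xi and relative time tau.
  It consists of a 1-contact of speed z(UL) (across which z is constant) and a 2-contact of
  speed w(UR) (across which w is constant); the middle state has w = w(UR), z = z(UL).\<close>
definition chap_riemann :: "real \<times> real \<Rightarrow> real \<times> real \<Rightarrow> real \<Rightarrow> real \<Rightarrow> real \<times> real" where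
  "chap_riemann UL UR xi tau =
     (let zL = z_of UL; wR = w_of UR;
          UM = (2 / (wR - zL), (wR + zL) / (wR - zL))
      in if xi < zL * tau then UL else if xi < wR * tau then UM else UR)"

definition src_H :: "(real \<Rightarrow> real) \<Rightarrow> (real \<Rightarrow> real) \<Rightarrow> real \<times> real \<Rightarrow> real \<Rightarrow> real \<times> real" where
  "src_H k B U t =
     (let rho = fst U; m = snd U in
      (- rho * deriv k t / k t + (m\<^sup>2 - 1) / rho * B t * deriv B t,
       - 2 * m * (deriv B t / B t + deriv k t / (2 * k t))))"

text \<open>The approximate solution on the time strip n h \<le> t < (n+1) h, given the grid
  values G at level n: in the cell Q_{nj} (n+j even, (j-1)l < x < (j+1)l) it is
  U_R + H(U_R,x,t)(t - n h), U_R the Riemann solution with data G(j-1), G(j+1).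
  Cell boundary points x = (j-1) l are assigned to cell j.\<close>
definition lf_level :: "(real \<Rightarrow> real) \<Rightarrow> (real \<Rightarrow> real) \<Rightarrow> real \<Rightarrow> real \<Rightarrow>
    (int \<Rightarrow> real \<times> real) \<Rightarrow> nat \<Rightarrow> real \<Rightarrow> real \<Rightarrow> real \<times> real" where
  "lf_level k B h l G n x t =
     (let kk = \<lfloor>x / l\<rfloor>;
          j = (if even (int n + kk) then kk else kk + 1);
          UR = chap_riemann (G (j - 1)) (G (j + 1)) (x - real_of_int j * l) (t - real n * h)
      in UR + (t - real n * h) *\<^sub>R src_H k B UR t)"

text \<open>Grid values U^n_j (only those with n+j even are used).\<close>
primrec lf_grid :: "(real \<Rightarrow> real) \<Rightarrow> (real \<Rightarrow> real) \<Rightarrow> real \<Rightarrow> real \<Rightarrow>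
    (real \<Rightarrow> real \<times> real) \<Rightarrow> nat \<Rightarrow> int \<Rightarrow> real \<times> real" where
  "lf_grid k B h l U0 0 = (\<lambda>j. U0 (real_of_int j * l))"
| "lf_grid k B h l U0 (Suc n) =
     (\<lambda>j. (1 / (2 * l)) *\<^sub>R
        integral {(real_of_int j - 1) * l .. (real_of_int j + 1) * l}
          (\<lambda>x. lf_level k B h l (lf_grid k B h l U0 n) n x (real (Suc n) * h)))"

definition lf_approx :: "(real \<Rightarrow> real) \<Rightarrow> (real \<Rightarrow> real) \<Rightarrow> real \<Rightarrow> real \<Rightarrow>
    (real \<Rightarrow> real \<times> real) \<Rightarrow> real \<Rightarrow> real \<Rightarrow> real \<times> real" where
  "lf_approx k B h l U0 x t =
     (let n = nat \<lfloor>t / h\<rfloor> in lf_level k B h l (lf_grid k B h l U0 n) n x t)"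

end

theory Submission
  imports Defs
begin

lemma exp_low:
  fixes x y :: real
  assumes "0 \<le> x" "x \<le> 1/2" "0 \<le> y"
  shows "exp (-(2*x + y)) \<le> (1 - x) / (1 + y)"
proof -
  have e1: "1 + 2*x \<le> exp (2*x)" using exp_ge_add_one_self[of "2*x"] by simp
  have e2: "1 + y \<le> exp y" using exp_ge_add_one_self[of y] by simp
  have "(1 + 2*x) * (1 + y) \<le> exp (2*x) * exp y"
    using e1 e2 assms by (intro mult_mono) auto
  hence "1 / (exp (2*x) * exp y) \<le> 1 / ((1 + 2*x) * (1 + y))"
    using assms by (intro divide_left_mono) auto
  also have "\<dots> \<le> (1 - x) / (1 + y)"
  proof -
    have "0 \<le> x*(1-2*x)" using assms by (intro mult_nonneg_nonneg) auto
    hence "1 \<le> (1 - x) * (1 + 2*x)" by (simp add: algebra_simps)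
    hence "1 / (1 + 2*x) \<le> 1 - x" using assms by (simp add: divide_le_eq)
    hence "(1 / (1 + 2*x)) / (1 + y) \<le> (1 - x) / (1 + y)" using assms by (intro divide_right_mono) auto
    thus ?thesis by simp
  qed
  finally have "1 / exp (2 * x + y) \<le> (1 - x) / (1 + y)" by (simp add: exp_add[symmetric])
  moreover have "exp (-(2*x + y)) = 1 / exp (2 * x + y)" by (metis exp_minus inverse_eq_divide)
  ultimately show ?thesis by simp
qed

lemma exp_up:
  fixes x :: real
  assumes "0 \<le> x" "x \<le> 1/4"
  shows "(1 + x/2) / (1 - x) \<le> exp (3*x)"
proof -
  have e1: "1 + x/2 \<le> exp (x/2)" using exp_ge_add_one_self[of "x/2"] by simp
  have e2: "1 + 2*x \<le> exp (2*x)" using exp_ge_add_one_self[of "2*x"] by simp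
  have "1 / (1 - x) \<le> 1 + 2*x"
  proof -
    have "0 \<le> x*(1-2*x)" using assms by (intro mult_nonneg_nonneg) auto
    hence "1 \<le> (1 - x) * (1 + 2*x)" by (simp add: algebra_simps)
    thus ?thesis using assms by (simp add: field_simps)
  qed
  hence "(1 + x/2) * (1 / (1 - x)) \<le> exp (x/2) * exp (2*x)"
    using e1 e2 assms \<open>1 / (1 - x) \<le> 1 + 2*x\<close> by (intro mult_mono) (auto intro: order_trans)
  hence "(1 + x/2) / (1 - x) \<le> exp (x/2) * exp (2*x)" by simp
  also have "\<dots> \<le> exp (3*x)" using assms by (simp add: exp_add[symmetric])
  finally show ?thesis .
qed
definition inR :: "real \<Rightarrow> real \<Rightarrow> real \<Rightarrow> real \<times> real \<Rightarrow> bool" where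
  "inR a b p U \<longleftrightarrow> fst U > 0 \<and> a \<le> w_of U \<and> w_of U \<le> p \<and> - p \<le> z_of U \<and> z_of U \<le> - b"

lemma riemann_inR:
  assumes "inR a b p UL" "inR a b p UR" "0 \<le> a" "0 \<le> b" "0 < a + b"
  shows "inR a b p (chap_riemann UL UR xi tau)"
proof -
  define zL where "zL = z_of UL"
  define wR where "wR = w_of UR"
  have d: "wR - zL > 0" using assms unfolding inR_def zL_def wR_def by linarith
  have M: "inR a b p (2 / (wR - zL), (wR + zL) / (wR - zL))"
  proof -
    have "w_of (2 / (wR - zL), (wR + zL) / (wR - zL)) = wR"
      using d by (simp add: w_of_def field_simps)
    moreover have "z_of (2 / (wR - zL), (wR + zL) / (wR - zL)) = zL"
      using d by (simp add: z_of_def field_simps)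
    ultimately show ?thesis using assms d unfolding inR_def zL_def wR_def by auto
  qed
  show ?thesis unfolding chap_riemann_def Let_def zL_def[symmetric] wR_def[symmetric]
    using assms M by auto
qed
lemma src_step:
  fixes rho m kap bet gg s K P a b p :: real
  assumes rho: "rho > 0" and ab: "0 \<le> a" "0 \<le> b"
   and w1: "a \<le> (m+1)/rho" and w2: "(m+1)/rho \<le> p" and z1: "-p \<le> (m-1)/rho" and z2: "(m-1)/rho \<le> -b"
   and kap: "\<bar>kap\<bar> \<le> K" and gg: "0 \<le> gg" "2*gg \<le> K" and bet: "bet \<le> 0" "\<bar>bet\<bar> \<le> K"
   and s: "0 \<le> s" "s*K \<le> 1/4" and pP: "p \<le> P"
   and rho'_def: "rho' = rho + s*(-rho*kap + (m^2-1)/rho*bet)" and m'_def: "m' = m + s*(-2*m*gg)"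
  shows "rho' > 0 \<and> a*exp(-(K + (K + P^2*K)) * s) \<le> (m'+1)/rho' \<and> (m'+1)/rho' \<le> p*exp(3*K * s) \<and>
     -(p*exp(3*K * s)) \<le> (m'-1)/rho' \<and> (m'-1)/rho' \<le> -(b*exp(-(K + (K + P^2*K)) * s))"
proof -
  define w where "w = (m+1)/rho"
  define z where "z = (m-1)/rho"
  define C where "C = K + P^2*K"
  have mw: "m + 1 = w*rho" using rho by (simp add: w_def)
  have mz: "m - 1 = z*rho" using rho by (simp add: z_def)
  have mm: "m = (w+z)*rho/2" using mw mz by (simp add: algebra_simps)
  define D where "D = 1 - s*kap + s*(w*z*bet)"
  have sq: "(m^2-1)/rho = w*z*rho"
  proof -
    have "m^2 - 1 = (m+1)*(m-1)" by (simp add: algebra_simps power2_eq_square)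
    thus ?thesis using mw mz rho by simp
  qed
  have rho': "rho' = rho * D" unfolding rho'_def sq D_def by (simp add: algebra_simps)
  have n1: "m' + 1 = rho * (w - s*gg*(w+z))"
  proof -
    have "m' + 1 = (m+1) - s*gg*((m+1)+(m-1))" unfolding m'_def by (simp add: algebra_simps)
    thus ?thesis unfolding mw mz by (simp add: algebra_simps)
  qed
  have n2: "m' - 1 = rho * (z - s*gg*(w+z))"
  proof -
    have "m' - 1 = (m-1) - s*gg*((m+1)+(m-1))" unfolding m'_def by (simp add: algebra_simps)
    thus ?thesis unfolding mw mz by (simp add: algebra_simps)
  qed
  have K0: "0 \<le> K" using kap by linarith
  have w0: "0 \<le> w" and z0: "z \<le> 0" and p0: "0 \<le> p" using ab w1 w2 z2 unfolding w_def z_def by linarith+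
  have wp: "w \<le> p" "-p \<le> z" "a \<le> w" "z \<le> -b" using w1 w2 z1 z2 unfolding w_def z_def by auto
  have wzb0: "0 \<le> w*z*bet"
  proof -
    have "0 \<le> (w*(-z))*(-bet)" using w0 z0 bet by (intro mult_nonneg_nonneg) auto
    thus ?thesis by simp
  qed
  have wzbP: "w*z*bet \<le> P^2*K"
  proof -
    have "w*(-z) \<le> p*p" using w0 z0 wp p0 by (intro mult_mono) auto
    also have "\<dots> \<le> P*P" using p0 pP by (intro mult_mono) auto
    finally have a1: "w*(-z) \<le> P*P" .
    have "(w*(-z))*(-bet) \<le> (P*P)*K" using bet w0 z0 K0 p0 pP by (intro mult_mono[OF a1]) auto
    thus ?thesis by (simp add: power2_eq_square)
  qed
  have skap1: "s*kap \<le> s*K" using s kap by (auto intro: mult_left_mono simp: abs_le_iff)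
  have "-kap \<le> K" using kap by (simp add: abs_le_iff)
  hence "s*(-kap) \<le> s*K" using s(1) by (rule mult_left_mono)
  hence skap: "s*kap \<le> s*K" "-(s*K) \<le> s*kap" using skap1 by auto
  have swzb: "0 \<le> s*(w*z*bet)" using wzb0 s by simp
  have swzb2: "s*(w*z*bet) \<le> s*(P^2*K)" using wzbP s(1) by (rule mult_left_mono)
  have Dlow: "1 - s*K \<le> D" unfolding D_def using skap swzb by linarith
  have Dup: "D \<le> 1 + s*C" unfolding D_def C_def using skap swzb2 by (simp add: algebra_simps)
  have Dpos: "D > 0" using Dlow s by linarith
  have "s*(2*gg) \<le> s*K" using gg(2) s(1) by (rule mult_left_mono)
  hence sgg: "0 \<le> s*gg" "s*gg \<le> s*K/2" using s gg by auto
  have C0: "0 \<le> C" unfolding C_def using K0 by simp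
  have sC: "0 \<le> s*C" using s C0 by simp
  have wnew: "(m'+1)/rho' = (w - s*gg*(w+z)) / D" using n1 rho' rho by simp
  have znew: "(m'-1)/rho' = (z - s*gg*(w+z)) / D" using n2 rho' rho by simp
  define Nw where "Nw = w - s*gg*(w+z)"
  define Nz where "Nz = z - s*gg*(w+z)"
  have Nw_lo: "a*(1 - s*K/2) \<le> Nw"
  proof -
    have "a*(1 - s*K/2) \<le> w*(1 - s*gg)" using wp sgg ab s by (intro mult_mono) auto
    moreover have "0 \<le> s*gg*(-z)" using sgg z0 by (intro mult_nonneg_nonneg[OF sgg(1)]) auto
    ultimately show ?thesis unfolding Nw_def by (simp add: algebra_simps)
  qed
  have Nw_up: "Nw \<le> p*(1 + s*K/2)"
  proof -
    have "w*(1 - s*gg) \<le> p" using wp sgg w0 by (smt (verit) mult_left_le)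
    moreover have "s*gg*(-z) \<le> (s*K/2)*p" using sgg z0 wp by (intro mult_mono) auto
    ultimately show ?thesis unfolding Nw_def by (simp add: algebra_simps)
  qed
  have Nz_up: "Nz \<le> -(b*(1 - s*K/2))"
  proof -
    have "b*(1 - s*K/2) \<le> (-z)*(1 - s*gg)" using wp sgg ab s by (intro mult_mono) auto
    moreover have "0 \<le> s*gg*w" using sgg w0 by (intro mult_nonneg_nonneg[OF sgg(1)]) auto
    ultimately show ?thesis unfolding Nz_def by (simp add: algebra_simps)
  qed
  have Nz_lo: "-(p*(1 + s*K/2)) \<le> Nz"
  proof -
    have "(-z)*(1 - s*gg) \<le> p" using wp sgg z0 by (smt (verit) mult_left_le)
    moreover have "s*gg*w \<le> (s*K/2)*p" using sgg w0 wp by (intro mult_mono) auto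
    ultimately show ?thesis unfolding Nz_def by (simp add: algebra_simps)
  qed
  have sK: "0 \<le> s*K" using s K0 by simp
  have e_lo: "exp(-(K + C) * s) \<le> (1 - s*K/2)/(1 + s*C)"
    using exp_low[of "s*K/2" "s*C"] sK s sC by (simp add: algebra_simps)
  have e_up: "(1 + s*K/2)/(1 - s*K) \<le> exp(3*K * s)"
    using exp_up[of "s*K"] sK s by (simp add: algebra_simps)
  have a_lo: "0 \<le> a*(1 - s*K/2)" using ab s by simp
  have b_lo: "0 \<le> b*(1 - s*K/2)" using ab s by simp
  have g1: "a*exp(-(K + C) * s) \<le> Nw / D"
  proof -
    have "a*exp(-(K + C) * s) \<le> a*((1 - s*K/2)/(1 + s*C))" using e_lo by (rule mult_left_mono[OF _ ab(1)])
    also have "\<dots> = (a*(1 - s*K/2))/(1 + s*C)" by simp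
    also have "\<dots> \<le> (a*(1 - s*K/2))/D" using Dup Dpos a_lo by (intro divide_left_mono) auto
    also have "\<dots> \<le> Nw / D" using Nw_lo Dpos by (intro divide_right_mono) auto
    finally show ?thesis .
  qed
  have g2: "Nw / D \<le> p*exp(3*K * s)"
  proof -
    have "Nw / D \<le> (p*(1 + s*K/2)) / D" using Nw_up Dpos by (intro divide_right_mono) auto
    also have "\<dots> \<le> (p*(1 + s*K/2)) / (1 - s*K)" using Dlow s p0 sK by (intro divide_left_mono) auto
    also have "\<dots> = p*((1 + s*K/2) / (1 - s*K))" by simp
    also have "\<dots> \<le> p*exp(3*K * s)" using e_up by (rule mult_left_mono[OF _ p0])
    finally show ?thesis .
  qed
  have g3: "Nz / D \<le> -(b*exp(-(K + C) * s))"
  proof -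
    have "b*exp(-(K + C) * s) \<le> b*((1 - s*K/2)/(1 + s*C))" using e_lo by (rule mult_left_mono[OF _ ab(2)])
    also have "\<dots> = (b*(1 - s*K/2))/(1 + s*C)" by simp
    also have "\<dots> \<le> (b*(1 - s*K/2))/D" using Dup Dpos b_lo by (intro divide_left_mono) auto
    also have "\<dots> \<le> (-Nz) / D" using Nz_up Dpos by (intro divide_right_mono) auto
    finally show ?thesis by simp
  qed
  have g4: "-(p*exp(3*K * s)) \<le> Nz / D"
  proof -
    have "(-Nz) / D \<le> (p*(1 + s*K/2)) / D" using Nz_lo Dpos by (intro divide_right_mono) auto
    also have "\<dots> \<le> (p*(1 + s*K/2)) / (1 - s*K)" using Dlow s p0 sK by (intro divide_left_mono) auto
    also have "\<dots> = p*((1 + s*K/2) / (1 - s*K))" by simp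
    also have "\<dots> \<le> p*exp(3*K * s)" using e_up by (rule mult_left_mono[OF _ p0])
    finally show ?thesis by simp
  qed
  show ?thesis using g1 g2 g3 g4 wnew znew rho' rho Dpos unfolding Nw_def Nz_def C_def by simp
qed
lemma avg_lin:
  fixes f :: "real \<Rightarrow> real \<times> real"
  assumes f: "f integrable_on {c..d}" and cd: "c \<le> d"
    and le: "\<And>x. x \<in> {c..d} \<Longrightarrow> al*fst(f x) + be* snd(f x) \<le> ga"
  shows "al*fst(integral {c..d} f) + be* snd(integral {c..d} f) \<le> ga*(d-c)"
proof -
  let ?h = "\<lambda>U::real\<times>real. al*fst U + be* snd U"
  have bl: "bounded_linear ?h"
    by (intro bounded_linear_add bounded_linear_mult_right bounded_linear_compose[OF bounded_linear_mult_right] bounded_linear_fst bounded_linear_snd)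
  have "((?h \<circ> f) has_integral ?h (integral {c..d} f)) {c..d}"
    by (rule has_integral_linear[OF integrable_integral[OF f] bl])
  moreover have "((\<lambda>x. ga) has_integral ((d-c)*ga)) {c..d}" using has_integral_const_real[of ga c d] cd by simp
  ultimately have "?h (integral {c..d} f) \<le> (d-c)*ga"
    by (rule has_integral_le) (use le in auto)
  thus ?thesis using cd by (simp add: mult.commute)
qed

lemma inR_lin:
  assumes "fst U > 0"
  shows "inR a b p U \<longleftrightarrow> a*fst U + (-1)* snd U \<le> 1 \<and> (-p)*fst U + 1* snd U \<le> -1 \<and>
            (-p)*fst U + (-1)* snd U \<le> -1 \<and> b*fst U + 1* snd U \<le> 1"
  using assms unfolding inR_def w_of_def z_of_def
  by (simp add: le_divide_eq divide_le_eq algebra_simps)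

lemma avg_inR:
  fixes f :: "real \<Rightarrow> real \<times> real"
  assumes f: "f integrable_on {c..d}" and cd: "c < d"
    and R: "\<And>x. x \<in> {c..d} \<Longrightarrow> inR a b p (f x)"
  shows "inR a b p ((1/(d-c)) *\<^sub>R integral {c..d} f)"
proof -
  define I where "I = integral {c..d} f"
  define L where "L = d - c"
  have L: "L > 0" using cd by (simp add: L_def)
  have pos: "\<And>x. x \<in> {c..d} \<Longrightarrow> fst (f x) > 0" using R by (simp add: inR_def)
  have lin: "\<And>x. x \<in> {c..d} \<Longrightarrow> a*fst (f x) + (-1)* snd (f x) \<le> 1 \<and> (-p)*fst (f x) + 1* snd (f x) \<le> -1 \<and>
            (-p)*fst (f x) + (-1)* snd (f x) \<le> -1 \<and> b*fst (f x) + 1* snd (f x) \<le> 1"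
    using R pos inR_lin by blast
  have i1: "a*fst I + (-1)* snd I \<le> 1*L" unfolding I_def L_def using lin cd by (intro avg_lin[OF f]) auto
  have i2: "(-p)*fst I + 1* snd I \<le> (-1)*L" unfolding I_def L_def using lin cd by (intro avg_lin[OF f]) auto
  have i3: "(-p)*fst I + (-1)* snd I \<le> (-1)*L" unfolding I_def L_def using lin cd by (intro avg_lin[OF f]) auto
  have i4: "b*fst I + 1* snd I \<le> 1*L" unfolding I_def L_def using lin cd by (intro avg_lin[OF f]) auto
  have i0: "(-1)*fst I + 0* snd I \<le> 0*L" unfolding I_def L_def using pos cd
    by (intro avg_lin[OF f]) (auto simp: less_imp_le)
  define U where "U = (1/L) *\<^sub>R I"
  have U1: "fst U = fst I / L" "snd U = snd I / L" by (simp_all add: U_def)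
  have j1: "a*fst U + (-1)* snd U \<le> 1" using i1 L unfolding U1 by (simp add: field_simps)
  have j2: "(-p)*fst U + 1* snd U \<le> -1" using i2 L unfolding U1 by (simp add: field_simps)
  have j3: "(-p)*fst U + (-1)* snd U \<le> -1" using i3 L unfolding U1 by (simp add: field_simps)
  have j4: "b*fst U + 1* snd U \<le> 1" using i4 L unfolding U1 by (simp add: field_simps)
  have j0: "0 \<le> fst U" using i0 L unfolding U1 by (simp add: field_simps)
  have "1 \<le> p * fst U" using j2 j3 by linarith
  hence "fst U \<noteq> 0" by auto
  hence "fst U > 0" using j0 by linarith
  hence "inR a b p U" using inR_lin j1 j2 j3 j4 by blast
  thus ?thesis unfolding U_def L_def I_def .
qed
lemma step3_int:
  fixes A Bv C :: "real \<times> real" and al be c d :: real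
  shows "(\<lambda>x. if x < al then A else if x < be then Bv else C) integrable_on {c..d}"
proof -
  define ga where "ga = max al be"
  let ?i = "\<lambda>q (x::real). (if x < q then 0 else 1::real)"
  have mi: "\<And>q. mono_on {c..d} (?i q)" by (rule mono_onI) (auto simp: not_less)
  have ii: "\<And>q. (?i q) integrable_on {c..d}" using mi by (rule integrable_on_mono_on)
  have eq: "(\<lambda>x. if x < al then A else if x < be then Bv else C) =
            (\<lambda>x. (A + ?i al x *\<^sub>R (Bv - A)) + ?i ga x *\<^sub>R (C - Bv))"
    by (rule ext) (auto simp: ga_def max_def)
  show ?thesis unfolding eq
    by (intro integrable_add integrable_const_ivl integrable_on_scaleR_left ii)
qed

lemma cell_int:
  assumes l: "l > 0"
  shows "(\<lambda>x. lf_level k B h l G n x t) integrable_on {real_of_int kk * l .. (real_of_int kk + 1) * l}"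
proof -
  define jj where "jj = (if even (int n + kk) then kk else kk + 1)"
  define UL where "UL = G (jj - 1)"
  define UR where "UR = G (jj + 1)"
  define tau where "tau = t - real n * h"
  define UM where "UM = (2 / (w_of UR - z_of UL), (w_of UR + z_of UL) / (w_of UR - z_of UL))"
  define Psi where "Psi = (\<lambda>U. U + tau *\<^sub>R src_H k B U t)"
  define g where "g = (\<lambda>x. if x < real_of_int jj * l + z_of UL * tau then Psi UL
                   else if x < real_of_int jj * l + w_of UR * tau then Psi UM else Psi UR)"
  have gi: "g integrable_on {real_of_int kk * l .. (real_of_int kk + 1) * l}"
    unfolding g_def by (rule step3_int)
  have "lf_level k B h l G n x t = g x"
    if x: "x \<in> {real_of_int kk * l .. (real_of_int kk + 1) * l} - {(real_of_int kk + 1) * l}" for x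
  proof -
    have "real_of_int kk * l \<le> x" "x < (real_of_int kk + 1) * l" using x by auto
    hence "real_of_int kk \<le> x / l" "x / l < real_of_int kk + 1" using l by (auto simp: field_simps)
    hence fl: "\<lfloor>x / l\<rfloor> = kk" by (simp add: floor_eq_iff)
    show ?thesis unfolding lf_level_def Let_def fl jj_def[symmetric] UL_def[symmetric] UR_def[symmetric]
      tau_def[symmetric] g_def Psi_def chap_riemann_def UM_def
      by (auto simp: algebra_simps)
  qed
  thus ?thesis by (intro integrable_spike_finite[OF _ _ gi, of "{(real_of_int kk + 1) * l}"]) auto
qed

lemma level_int:
  assumes l: "l > 0"
  shows "(\<lambda>x. lf_level k B h l G n x t) integrable_on {(real_of_int j - 1) * l .. (real_of_int j + 1) * l}"
proof (rule Henstock_Kurzweil_Integration.integrable_combine[where c="real_of_int j * l"])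
  show "(real_of_int j - 1) * l \<le> real_of_int j * l" "real_of_int j * l \<le> (real_of_int j + 1) * l"
    using l by (auto simp: algebra_simps)
  show "(\<lambda>x. lf_level k B h l G n x t) integrable_on {(real_of_int j - 1) * l .. real_of_int j * l}"
    using cell_int[OF l, of k B h G n t "j - 1"] by simp
  show "(\<lambda>x. lf_level k B h l G n x t) integrable_on {real_of_int j * l .. (real_of_int j + 1) * l}"
    using cell_int[OF l, of k B h G n t j] by simp
qed
lemma src_inR:
  assumes U: "inR a b p U" and ab: "0 \<le> a" "0 \<le> b"
   and kap: "\<bar>deriv k t / k t\<bar> \<le> K"
   and gg: "0 \<le> deriv B t / B t + deriv k t / (2 * k t)" "2*(deriv B t / B t + deriv k t / (2 * k t)) \<le> K"
   and bet: "B t * deriv B t \<le> 0" "\<bar>B t * deriv B t\<bar> \<le> K"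
   and s: "0 \<le> s" "s*K \<le> 1/4" and pP: "p \<le> P"
  shows "inR (a*exp(-(K + (K + P^2*K)) * s)) (b*exp(-(K + (K + P^2*K)) * s)) (p*exp(3*K* s))
           (U + s *\<^sub>R src_H k B U t)"
proof -
  obtain rho m where Ueq: "U = (rho, m)" by (cases U)
  have rho: "rho > 0" using U Ueq by (simp add: inR_def)
  have c: "a \<le> (m+1)/rho" "(m+1)/rho \<le> p" "-p \<le> (m-1)/rho" "(m-1)/rho \<le> -b"
    using U Ueq by (auto simp: inR_def w_of_def z_of_def)
  define rho' where "rho' = rho + s*(-rho*(deriv k t / k t) + (m^2-1)/rho*(B t * deriv B t))"
  define m' where "m' = m + s*(-2*m*(deriv B t / B t + deriv k t / (2 * k t)))"
  have new: "U + s *\<^sub>R src_H k B U t = (rho', m')"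
    unfolding Ueq src_H_def Let_def rho'_def m'_def by (simp add: algebra_simps)
  have "rho' > 0 \<and> a*exp(-(K + (K + P^2*K)) * s) \<le> (m'+1)/rho' \<and> (m'+1)/rho' \<le> p*exp(3*K* s) \<and>
     -(p*exp(3*K* s)) \<le> (m'-1)/rho' \<and> (m'-1)/rho' \<le> -(b*exp(-(K + (K + P^2*K)) * s))"
    by (rule src_step[OF rho ab c kap gg bet s pP rho'_def m'_def])
  thus ?thesis unfolding new inR_def w_of_def z_of_def by simp
qed

lemma level_inR:
  assumes G: "\<And>j. inR a b p (G j)" and ab: "0 \<le> a" "0 \<le> b" "0 < a + b"
   and kap: "\<bar>deriv k t / k t\<bar> \<le> K"
   and gg: "0 \<le> deriv B t / B t + deriv k t / (2 * k t)" "2*(deriv B t / B t + deriv k t / (2 * k t)) \<le> K"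
   and bet: "B t * deriv B t \<le> 0" "\<bar>B t * deriv B t\<bar> \<le> K"
   and s: "0 \<le> t - real n * h" "(t - real n * h)*K \<le> 1/4" and pP: "p \<le> P"
  shows "inR (a*exp(-(K + (K + P^2*K)) * (t - real n * h))) (b*exp(-(K + (K + P^2*K)) * (t - real n * h)))
           (p*exp(3*K*(t - real n * h))) (lf_level k B h l G n x t)"
  unfolding lf_level_def Let_def
  by (rule src_inR[OF riemann_inR[OF G G ab] ab(1,2) kap gg bet s pP])
definition bnd :: "(real \<Rightarrow> real) \<Rightarrow> (real \<Rightarrow> real) \<Rightarrow> real \<Rightarrow> real \<Rightarrow> bool" where
  "bnd k B K t \<longleftrightarrow> \<bar>deriv k t / k t\<bar> \<le> K \<and> 0 \<le> deriv B t / B t + deriv k t / (2 * k t) \<and>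
      2*(deriv B t / B t + deriv k t / (2 * k t)) \<le> K \<and> B t * deriv B t \<le> 0 \<and> \<bar>B t * deriv B t\<bar> \<le> K"

lemma level_inR':
  assumes G: "\<And>j. inR a b p (G j)" and ab: "0 \<le> a" "0 \<le> b" "0 < a + b"
   and bd: "bnd k B K t"
   and s: "0 \<le> t - real n * h" "(t - real n * h)*K \<le> 1/4" and pP: "p \<le> P"
   and A: "A = K + (K + P^2*K)"
  shows "inR (a*exp(-A * (t - real n * h))) (b*exp(-A * (t - real n * h)))
           (p*exp(3*K*(t - real n * h))) (lf_level k B h l G n x t)"
  using bd unfolding bnd_def A by (intro level_inR[OF G ab _ _ _ _ _ s pP]) auto

lemma grid_inR:
  assumes U0: "\<And>x. inR a b P0 (U0 x)" and ab: "0 \<le> a" "0 \<le> b" "0 < a + b"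
   and bd: "\<And>t. t \<in> {0..T} \<Longrightarrow> bnd k B K t"
   and h: "h > 0" "h*K \<le> 1/4" and l: "l > 0" and P0: "0 \<le> P0" and K: "0 \<le> K"
   and P: "P = P0 * exp(3*K*T)" and A: "A = K + (K + P^2*K)"
  shows "real n * h \<le> T \<Longrightarrow> inR (a*exp(-A*(real n*h))) (b*exp(-A*(real n*h))) (P0*exp(3*K*(real n*h)))
            (lf_grid k B h l U0 n j)"
proof (induction n arbitrary: j)
  case 0
  then show ?case using U0 by simp
next
  case (Suc n)
  have nT: "real n * h \<le> T" using Suc.prems h by (simp add: algebra_simps)
  have IH: "\<And>j. inR (a*exp(-A*(real n*h))) (b*exp(-A*(real n*h))) (P0*exp(3*K*(real n*h))) (lf_grid k B h l U0 n j)"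
    using Suc.IH[OF nT] .
  define t where "t = real (Suc n) * h"
  have tT: "t \<in> {0..T}" using Suc.prems h unfolding t_def by auto
  have st: "t - real n * h = h" unfolding t_def by (simp add: algebra_simps)
  have ab': "0 \<le> a*exp(-A*(real n*h))" "0 \<le> b*exp(-A*(real n*h))" "0 < a*exp(-A*(real n*h)) + b*exp(-A*(real n*h))"
    using ab by (auto simp: distrib_right[symmetric])
  have pP: "P0*exp(3*K*(real n*h)) \<le> P" unfolding P using P0 K nT by (auto intro!: mult_left_mono)
  have lev: "inR (a*exp(-A*(real n*h))*exp(-A * h)) (b*exp(-A*(real n*h))*exp(-A * h))
           (P0*exp(3*K*(real n*h))*exp(3*K*h)) (lf_level k B h l (lf_grid k B h l U0 n) n x t)" for x
    using level_inR'[OF IH ab' bd[OF tT], of n h, OF _ _ pP A] st h by simp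
  have e1: "c*exp(-A*(real n*h))*exp(-A * h) = c*exp(-A*(real (Suc n)*h))" for c
    by (simp add: mult.assoc exp_add[symmetric] algebra_simps)
  have e2: "P0*exp(3*K*(real n*h))*exp(3*K*h) = P0*exp(3*K*(real (Suc n)*h))"
    by (simp add: mult.assoc exp_add[symmetric] algebra_simps)
  have lev': "inR (a*exp(-A*(real (Suc n)*h))) (b*exp(-A*(real (Suc n)*h)))
           (P0*exp(3*K*(real (Suc n)*h))) (lf_level k B h l (lf_grid k B h l U0 n) n x t)" for x
    using lev[of x] by (simp only: e1 e2)
  have len: "(real_of_int j + 1) * l - (real_of_int j - 1) * l = 2 * l" by (simp add: algebra_simps)
  have "inR (a*exp(-A*(real (Suc n)*h))) (b*exp(-A*(real (Suc n)*h))) (P0*exp(3*K*(real (Suc n)*h)))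
     ((1/((real_of_int j + 1) * l - (real_of_int j - 1) * l)) *\<^sub>R
        integral {(real_of_int j - 1) * l .. (real_of_int j + 1) * l} (\<lambda>x. lf_level k B h l (lf_grid k B h l U0 n) n x t))"
    by (rule avg_inR[OF level_int[OF l]]) (use l lev' in auto)
  thus ?case unfolding len t_def by simp
qed
lemma approx_inR:
  assumes U0: "\<And>x. inR a b P0 (U0 x)" and ab: "0 \<le> a" "0 \<le> b" "0 < a + b"
   and bd: "\<And>t. t \<in> {0..T} \<Longrightarrow> bnd k B K t"
   and h: "h > 0" "h*K \<le> 1/4" and l: "l > 0" and P0: "0 \<le> P0" and K: "0 \<le> K"
   and P: "P = P0 * exp(3*K*T)" and A: "A = K + (K + P^2*K)"
   and t: "t \<in> {0..T}"
  shows "inR (a*exp(-A*t)) (b*exp(-A*t)) (P0*exp(3*K*t)) (lf_approx k B h l U0 x t)"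
proof -
  define n where "n = nat \<lfloor>t / h\<rfloor>"
  have t0: "0 \<le> t" using t by simp
  have rn: "real n = of_int \<lfloor>t / h\<rfloor>" unfolding n_def using t0 h by simp
  have n1: "real n * h \<le> t"
  proof -
    have "real n \<le> t / h" unfolding rn by linarith
    thus ?thesis using h by (simp add: field_simps)
  qed
  have n2: "t - real n * h < h"
  proof -
    have "t / h < real n + 1" unfolding rn by linarith
    thus ?thesis using h by (simp add: field_simps)
  qed
  have nT: "real n * h \<le> T" using n1 t by simp
  have G: "\<And>j. inR (a*exp(-A*(real n*h))) (b*exp(-A*(real n*h))) (P0*exp(3*K*(real n*h))) (lf_grid k B h l U0 n j)"
    by (rule grid_inR[OF U0 ab bd h l P0 K P A nT])
  have ab': "0 \<le> a*exp(-A*(real n*h))" "0 \<le> b*exp(-A*(real n*h))" "0 < a*exp(-A*(real n*h)) + b*exp(-A*(real n*h))"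
    using ab by (auto simp: distrib_right[symmetric])
  have pP: "P0*exp(3*K*(real n*h)) \<le> P" unfolding P using P0 K nT by (auto intro!: mult_left_mono)
  have sK: "(t - real n * h)*K \<le> 1/4"
  proof -
    have "(t - real n * h)*K \<le> h*K" using n2 K by (intro mult_right_mono) auto
    thus ?thesis using h by linarith
  qed
  have lev: "inR (a*exp(-A*(real n*h))*exp(-A * (t - real n * h))) (b*exp(-A*(real n*h))*exp(-A * (t - real n * h)))
           (P0*exp(3*K*(real n*h))*exp(3*K*(t - real n * h))) (lf_level k B h l (lf_grid k B h l U0 n) n x t)"
    using level_inR'[OF G ab' bd[OF t] _ sK pP A] n1 by simp
  have e1: "c*exp(-A*(real n*h))*exp(-A * (t - real n * h)) = c*exp(-A*t)" for c
    by (simp add: mult.assoc exp_add[symmetric] algebra_simps)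
  have e2: "P0*exp(3*K*(real n*h))*exp(3*K*(t - real n * h)) = P0*exp(3*K*t)"
    by (simp add: mult.assoc exp_add[symmetric] algebra_simps)
  show ?thesis using lev unfolding lf_approx_def Let_def n_def[symmetric] by (simp only: e1 e2)
qed
lemma smooth_facts:
  assumes "smooth_fun f"
  shows "\<And>x. DERIV f x :> deriv f x" "\<And>x. DERIV (deriv f) x :> deriv (deriv f) x"
    "continuous_on S f" "continuous_on S (deriv f)"
proof -
  have d0: "f differentiable (at x)" for x using assms unfolding smooth_fun_def
    by (metis funpow_0)
  have d1: "deriv f differentiable (at x)" for x
  proof -
    have "((deriv^^(Suc 0)) f) differentiable (at x)" using assms unfolding smooth_fun_def by blast
    thus ?thesis by simp
  qed
  show "\<And>x. DERIV f x :> deriv f x" using d0 DERIV_deriv_iff_real_differentiable by blast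
  show "\<And>x. DERIV (deriv f) x :> deriv (deriv f) x" using d1 DERIV_deriv_iff_real_differentiable by blast
  show "continuous_on S f" using d0
    by (intro continuous_at_imp_continuous_on ballI differentiable_imp_continuous_within) auto
  show "continuous_on S (deriv f)" using d1
    by (intro continuous_at_imp_continuous_on ballI differentiable_imp_continuous_within) auto
qed

lemma mono_deriv_nonneg:
  fixes f :: "real \<Rightarrow> real"
  assumes m: "mono_on {0..T} f" and T: "T > 0" and t: "t \<in> {0..T}" and d: "DERIV f t :> D"
  shows "0 \<le> D"
proof (rule ccontr)
  assume "\<not> 0 \<le> D"
  hence D: "D < 0" by linarith
  have t0: "0 \<le> t" "t \<le> T" using t by (simp_all only: atLeastAtMost_iff)
  show False
  proof (cases "t < T")
    case True
    obtain d where d0: "d > 0" and dd: "\<forall>h>0. h < d \<longrightarrow> f t > f (t + h)"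
      using DERIV_neg_dec_right[OF d D] by blast
    define hh where "hh = min (d/2) ((T - t)/2)"
    have h1: "hh \<le> (T - t)/2" unfolding hh_def by (rule min.cobounded2)
    have h2: "hh \<le> d/2" unfolding hh_def by (rule min.cobounded1)
    have h3: "hh > 0" using d0 True unfolding hh_def by auto
    have h4: "t + hh \<le> T" using h1 \<open>t < T\<close> by (simp add: le_divide_eq)
    have hh: "hh > 0" "hh < d" "t + hh \<le> T" using h2 h3 h4 d0 by linarith+
    have m1: "t + hh \<in> {0..T}" unfolding atLeastAtMost_iff using t0 hh by linarith
    have "f t \<le> f (t + hh)" using hh by (intro mono_onD[OF m t m1]) simp
    moreover have "f t > f (t + hh)" using dd hh by blast
    ultimately show False by linarith
  next
    case False
    hence tT: "t = T" using t0 by linarith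
    obtain d where d0: "d > 0" and dd: "\<forall>h>0. h < d \<longrightarrow> f t < f (t - h)"
      using DERIV_neg_dec_left[OF d D] by blast
    define hh where "hh = min (d/2) (T/2)"
    have "hh \<le> T/2" "hh \<le> d/2" unfolding hh_def by (rule min.cobounded2, rule min.cobounded1)
    moreover have "hh > 0" using d0 T unfolding hh_def by auto
    ultimately have hh: "hh > 0" "hh < d" "0 \<le> t - hh" using d0 T tT by linarith+
    have m1: "t - hh \<in> {0..T}" unfolding atLeastAtMost_iff using t0 hh by linarith
    have "f (t - hh) \<le> f t" using hh by (intro mono_onD[OF m m1 t]) simp
    moreover have "f t < f (t - hh)" using dd hh by blast
    ultimately show False by linarith
  qed
qed
lemma twice_le: fixes x K1 K2 K3 :: real
  shows "x \<le> K2 \<Longrightarrow> 0 \<le> K1 \<Longrightarrow> 0 \<le> K2 \<Longrightarrow> 0 \<le> K3 \<Longrightarrow> 2*x \<le> 1 + K1 + 2*K2 + K3"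
  by linarith

lemma exists_K:
  fixes T :: real and k B :: "real \<Rightarrow> real"
  assumes T: "T > 0" and sk: "smooth_fun k" and sB: "smooth_fun B"
    and pos: "\<forall>t\<in>{0..T}. k t > 0 \<and> B t > 0"
    and ode: "\<forall>t\<in>{0..T}. deriv (deriv B) t = (k t)\<^sup>2 * B t"
    and BT: "deriv B T = 0"
    and mono: "mono_on {0..T} (\<lambda>t. ln ((B t)\<^sup>2 * k t))"
  shows "\<exists>K>0. \<forall>t\<in>{0..T}. bnd k B K t"
proof -
  note dk = smooth_facts(1)[OF sk] and dB = smooth_facts(1)[OF sB] and ddB = smooth_facts(2)[OF sB]
  have ck: "continuous_on {0..T} k" "continuous_on {0..T} (deriv k)" using smooth_facts(3,4)[OF sk] by blast+
  have cB: "continuous_on {0..T} B" "continuous_on {0..T} (deriv B)" using smooth_facts(3,4)[OF sB] by blast+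
  have Bneg: "deriv B t \<le> 0" if t: "t \<in> {0..T}" for t
  proof -
    have "deriv B t \<le> deriv B T"
    proof (rule DERIV_nonneg_imp_nondecreasing[of t T "deriv B"])
      show "t \<le> T" using t by simp
      fix x assume x: "t \<le> x" "x \<le> T"
      hence x0: "x \<in> {0..T}" using t by simp
      have "B x > 0" using pos x0 by blast
      hence "0 \<le> (k x)\<^sup>2 * B x" by simp
      thus "\<exists>y. DERIV (deriv B) x :> y \<and> 0 \<le> y" using ddB[of x] ode x0 by metis
    qed
    thus ?thesis using BT by simp
  qed
  have ggpos: "0 \<le> deriv B t / B t + deriv k t / (2 * k t)" if t: "t \<in> {0..T}" for t
  proof -
    have kp: "k t > 0" and Bp: "B t > 0" using pos t by auto
    have p1: "DERIV (\<lambda>t. (B t)^2) t :> of_nat 2 * (deriv B t * B t ^ (2 - Suc 0))"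
      by (rule DERIV_power[OF dB])
    have p2: "DERIV (\<lambda>t. (B t)^2 * k t) t :> of_nat 2 * (deriv B t * B t ^ (2 - Suc 0)) * k t + deriv k t * (B t)^2"
      by (rule DERIV_mult[OF p1 dk])
    have pp: "0 < (B t)^2 * k t" using kp Bp by simp
    have p3: "DERIV (\<lambda>t. ln ((B t)^2 * k t)) t :> 1 / ((B t)^2 * k t) * (of_nat 2 * (deriv B t * B t ^ (2 - Suc 0)) * k t + deriv k t * (B t)^2)"
      by (rule DERIV_chain2[OF DERIV_ln_divide[OF pp] p2])
    have eq: "1 / ((B t)^2 * k t) * (of_nat 2 * (deriv B t * B t ^ (2 - Suc 0)) * k t + deriv k t * (B t)^2)
        = 2 * (deriv B t / B t + deriv k t / (2 * k t))"
      using kp Bp by (simp add: field_simps power2_eq_square)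
    have "0 \<le> 1 / ((B t)^2 * k t) * (of_nat 2 * (deriv B t * B t ^ (2 - Suc 0)) * k t + deriv k t * (B t)^2)"
      by (rule mono_deriv_nonneg[OF mono T t p3])
    thus ?thesis unfolding eq by simp
  qed
  have c1: "continuous_on {0..T} (\<lambda>t. deriv k t / k t)"
    using ck pos by (intro continuous_on_divide) auto
  have c2: "continuous_on {0..T} (\<lambda>t. deriv B t / B t + deriv k t / (2 * k t))"
    using ck cB pos by (intro continuous_on_add continuous_on_divide continuous_on_mult continuous_on_const) auto
  have c3: "continuous_on {0..T} (\<lambda>t. B t * deriv B t)"
    using cB by (intro continuous_on_mult) auto
  obtain K1 where K1: "K1 \<ge> 0" "\<And>t. t \<in> {0..T} \<Longrightarrow> norm (deriv k t / k t) \<le> K1"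
    using continuous_on_compact_bound[OF compact_Icc c1] by blast
  obtain K2 where K2: "K2 \<ge> 0" "\<And>t. t \<in> {0..T} \<Longrightarrow> norm (deriv B t / B t + deriv k t / (2 * k t)) \<le> K2"
    using continuous_on_compact_bound[OF compact_Icc c2] by blast
  obtain K3 where K3: "K3 \<ge> 0" "\<And>t. t \<in> {0..T} \<Longrightarrow> norm (B t * deriv B t) \<le> K3"
    using continuous_on_compact_bound[OF compact_Icc c3] by blast
  define K where "K = 1 + K1 + 2*K2 + K3"
  have "bnd k B K t" if t: "t \<in> {0..T}" for t
  proof -
    have b1: "\<bar>deriv k t / k t\<bar> \<le> K1" using K1(2)[OF t] by (simp only: real_norm_def)
    have b2: "\<bar>deriv B t / B t + deriv k t / (2 * k t)\<bar> \<le> K2" using K2(2)[OF t] by (simp only: real_norm_def)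
    have b3: "\<bar>B t * deriv B t\<bar> \<le> K3" using K3(2)[OF t] by (simp only: real_norm_def)
    have a1: "\<bar>deriv k t / k t\<bar> \<le> K" using b1 K1(1) K2(1) K3(1) unfolding K_def by linarith
    have a2: "2*(deriv B t / B t + deriv k t / (2 * k t)) \<le> K" using abs_le_D1[OF b2] K1(1) K2(1) K3(1) unfolding K_def
      by (rule twice_le)
    have a3: "\<bar>B t * deriv B t\<bar> \<le> K" using b3 K1(1) K2(1) K3(1) unfolding K_def by linarith
    have Bt: "B t > 0" using pos t by blast
    have a4: "B t * deriv B t \<le> 0" using Bt Bneg[OF t] by (simp add: mult_nonneg_nonpos)
    show ?thesis unfolding bnd_def using a1 a2 a3 a4 ggpos[OF t] by blast
  qed
  moreover have "K > 0" unfolding K_def using K1 K2 K3 by simp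
  ultimately show ?thesis by blast
qed
lemma main_case:
  assumes U0: "\<And>x. inR a b P0 (U0 x)" and ab: "0 \<le> a" "0 \<le> b" "0 < a + b"
   and bd: "\<And>t. t \<in> {0..T} \<Longrightarrow> bnd k B K t"
   and K: "0 < K" and P0: "0 \<le> P0"
   and P: "P = P0 * exp(3*K*T)" and A: "A = K + (K + P^2*K)"
   and h: "0 < h" "h \<le> 1/(4*K)" and l: "0 < l" and t: "t \<in> {0..T}"
  shows "a * exp (- A * T) \<le> w_of (lf_approx k B h l U0 x t) \<and>
            w_of (lf_approx k B h l U0 x t) \<le> P \<and>
            - P \<le> z_of (lf_approx k B h l U0 x t) \<and>
            z_of (lf_approx k B h l U0 x t) \<le> - (b * exp (- A * T))"
proof -
  have hK: "h*K \<le> 1/4" using h K by (simp add: field_simps)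
  have R: "inR (a*exp(-A*t)) (b*exp(-A*t)) (P0*exp(3*K*t)) (lf_approx k B h l U0 x t)"
    by (rule approx_inR[OF U0 ab bd h(1) hK l P0 less_imp_le[OF K] P A t])
  have A0: "0 \<le> A" unfolding A using K by simp
  have tT: "t \<le> T" using t by simp
  have e1: "exp (- A * T) \<le> exp(-A*t)" using A0 tT by (simp add: mult_left_mono)
  have e2: "exp(3*K*t) \<le> exp(3*K*T)" using K tT by simp
  have "a * exp (- A * T) \<le> a*exp(-A*t)" using e1 by (rule mult_left_mono[OF _ ab(1)])
  moreover have "b * exp (- A * T) \<le> b*exp(-A*t)" using e1 by (rule mult_left_mono[OF _ ab(2)])
  moreover have "P0*exp(3*K*t) \<le> P" unfolding P using e2 by (rule mult_left_mono[OF _ P0])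
  ultimately show ?thesis using R unfolding inR_def by linarith
qed

theorem theorem1:
  fixes T \<Lambda> \<delta>0 P0 :: real and k B rho0 m0 :: "real \<Rightarrow> real"
  assumes "T > 0" and "\<Lambda> > 0" and "\<delta>0 > 0" and "P0 > 0"
    and "smooth_fun k" and "smooth_fun B"
    and "\<forall>t\<in>{0..T}. k t > 0 \<and> B t > 0"
    and "\<forall>t\<in>{0..T}. deriv (deriv B) t = (k t)\<^sup>2 * B t"
    and "B T = 1" and "deriv B T = 0"
    and "mono_on {0..T} (\<lambda>t. ln ((B t)\<^sup>2 * k t))"
    and "\<forall>x. rho0 x > 0"
  shows
   "((\<forall>x. \<delta>0 \<le> w_of (rho0 x, m0 x) \<and> w_of (rho0 x, m0 x) \<le> P0 \<and>
          - P0 \<le> z_of (rho0 x, m0 x) \<and> z_of (rho0 x, m0 x) \<le> 0) \<longrightarrow>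
      (\<exists>h0>0. \<exists>P>0. \<exists>A>0. \<forall>h l. 0 < h \<longrightarrow> h \<le> h0 \<longrightarrow> 0 < l \<longrightarrow> l / (2 * h) \<le> \<Lambda> \<longrightarrow>
         (\<forall>x. \<forall>t\<in>{0..T}. max (z_of (lf_approx k B h l (\<lambda>x. (rho0 x, m0 x)) x t))
                                (w_of (lf_approx k B h l (\<lambda>x. (rho0 x, m0 x)) x t)) < l / (2 * h)) \<longrightarrow>
         (\<forall>x. \<forall>t\<in>{0..T}.
            \<delta>0 * exp (- A * T) \<le> w_of (lf_approx k B h l (\<lambda>x. (rho0 x, m0 x)) x t) \<and>
            w_of (lf_approx k B h l (\<lambda>x. (rho0 x, m0 x)) x t) \<le> P \<and>
            - P \<le> z_of (lf_approx k B h l (\<lambda>x. (rho0 x, m0 x)) x t) \<and>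
            z_of (lf_approx k B h l (\<lambda>x. (rho0 x, m0 x)) x t) \<le> 0)))
    \<and>
    ((\<forall>x. 0 \<le> w_of (rho0 x, m0 x) \<and> w_of (rho0 x, m0 x) \<le> P0 \<and>
          - P0 \<le> z_of (rho0 x, m0 x) \<and> z_of (rho0 x, m0 x) \<le> - \<delta>0) \<longrightarrow>
      (\<exists>h0>0. \<exists>P>0. \<exists>A>0. \<forall>h l. 0 < h \<longrightarrow> h \<le> h0 \<longrightarrow> 0 < l \<longrightarrow> l / (2 * h) \<le> \<Lambda> \<longrightarrow>
         (\<forall>x. \<forall>t\<in>{0..T}. max (z_of (lf_approx k B h l (\<lambda>x. (rho0 x, m0 x)) x t))
                                (w_of (lf_approx k B h l (\<lambda>x. (rho0 x, m0 x)) x t)) < l / (2 * h)) \<longrightarrow>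
         (\<forall>x. \<forall>t\<in>{0..T}.
            0 \<le> w_of (lf_approx k B h l (\<lambda>x. (rho0 x, m0 x)) x t) \<and>
            w_of (lf_approx k B h l (\<lambda>x. (rho0 x, m0 x)) x t) \<le> P \<and>
            - P \<le> z_of (lf_approx k B h l (\<lambda>x. (rho0 x, m0 x)) x t) \<and>
            z_of (lf_approx k B h l (\<lambda>x. (rho0 x, m0 x)) x t) \<le> - \<delta>0 * exp (- A * T))))"
proof -
  obtain K where K: "K > 0" and bd: "\<And>t. t \<in> {0..T} \<Longrightarrow> bnd k B K t"
    using exists_K[OF assms(1,5,6,7,8,10,11)] by blast
  define P where "P = P0 * exp(3*K*T)"
  define A where "A = K + (K + P^2*K)"
  define h0 where "h0 = 1/(4*K)"
  define U0 where "U0 = (\<lambda>x. (rho0 x, m0 x))"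
  have P0': "0 \<le> P0" using assms(4) by simp
  have Ppos: "P > 0" unfolding P_def using assms(4) by simp
  have Apos: "A > 0" unfolding A_def using K by (simp add: add_pos_nonneg)
  have h0pos: "h0 > 0" unfolding h0_def using K by simp
  show ?thesis
  proof (intro conjI impI)
    assume init: "\<forall>x. \<delta>0 \<le> w_of (rho0 x, m0 x) \<and> w_of (rho0 x, m0 x) \<le> P0 \<and>
          - P0 \<le> z_of (rho0 x, m0 x) \<and> z_of (rho0 x, m0 x) \<le> 0"
    have U: "\<And>x. inR \<delta>0 0 P0 ((\<lambda>x. (rho0 x, m0 x)) x)" using init assms(12) unfolding inR_def by auto
    have main: "\<forall>h l. 0 < h \<longrightarrow> h \<le> h0 \<longrightarrow> 0 < l \<longrightarrow> l / (2 * h) \<le> \<Lambda> \<longrightarrow>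
         (\<forall>x. \<forall>t\<in>{0..T}. max (z_of (lf_approx k B h l (\<lambda>x. (rho0 x, m0 x)) x t))
                                (w_of (lf_approx k B h l (\<lambda>x. (rho0 x, m0 x)) x t)) < l / (2 * h)) \<longrightarrow>
         (\<forall>x. \<forall>t\<in>{0..T}.
            \<delta>0 * exp (- A * T) \<le> w_of (lf_approx k B h l (\<lambda>x. (rho0 x, m0 x)) x t) \<and>
            w_of (lf_approx k B h l (\<lambda>x. (rho0 x, m0 x)) x t) \<le> P \<and>
            - P \<le> z_of (lf_approx k B h l (\<lambda>x. (rho0 x, m0 x)) x t) \<and>
            z_of (lf_approx k B h l (\<lambda>x. (rho0 x, m0 x)) x t) \<le> 0)"
    proof (intro allI impI ballI)
      fix h l x t :: real assume h: "0 < h" "h \<le> h0" and l: "0 < l" and t: "t \<in> {0..T}"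
      show "\<delta>0 * exp (- A * T) \<le> w_of (lf_approx k B h l (\<lambda>x. (rho0 x, m0 x)) x t) \<and>
            w_of (lf_approx k B h l (\<lambda>x. (rho0 x, m0 x)) x t) \<le> P \<and>
            - P \<le> z_of (lf_approx k B h l (\<lambda>x. (rho0 x, m0 x)) x t) \<and>
            z_of (lf_approx k B h l (\<lambda>x. (rho0 x, m0 x)) x t) \<le> 0"
        using main_case[OF U _ _ _ bd K P0' P_def A_def h(1) _ l t, where x=x] h assms(3)
        unfolding h0_def by simp
    qed
    show "\<exists>h0>0. \<exists>P>0. \<exists>A>0. \<forall>h l. 0 < h \<longrightarrow> h \<le> h0 \<longrightarrow> 0 < l \<longrightarrow> l / (2 * h) \<le> \<Lambda> \<longrightarrow>
         (\<forall>x. \<forall>t\<in>{0..T}. max (z_of (lf_approx k B h l (\<lambda>x. (rho0 x, m0 x)) x t))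
                                (w_of (lf_approx k B h l (\<lambda>x. (rho0 x, m0 x)) x t)) < l / (2 * h)) \<longrightarrow>
         (\<forall>x. \<forall>t\<in>{0..T}.
            \<delta>0 * exp (- A * T) \<le> w_of (lf_approx k B h l (\<lambda>x. (rho0 x, m0 x)) x t) \<and>
            w_of (lf_approx k B h l (\<lambda>x. (rho0 x, m0 x)) x t) \<le> P \<and>
            - P \<le> z_of (lf_approx k B h l (\<lambda>x. (rho0 x, m0 x)) x t) \<and>
            z_of (lf_approx k B h l (\<lambda>x. (rho0 x, m0 x)) x t) \<le> 0)"
      using main h0pos Ppos Apos by blast
  next
    assume init: "\<forall>x. 0 \<le> w_of (rho0 x, m0 x) \<and> w_of (rho0 x, m0 x) \<le> P0 \<and>
          - P0 \<le> z_of (rho0 x, m0 x) \<and> z_of (rho0 x, m0 x) \<le> - \<delta>0"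
    have U: "\<And>x. inR 0 \<delta>0 P0 ((\<lambda>x. (rho0 x, m0 x)) x)" using init assms(12) unfolding inR_def by auto
    have main: "\<forall>h l. 0 < h \<longrightarrow> h \<le> h0 \<longrightarrow> 0 < l \<longrightarrow> l / (2 * h) \<le> \<Lambda> \<longrightarrow>
         (\<forall>x. \<forall>t\<in>{0..T}. max (z_of (lf_approx k B h l (\<lambda>x. (rho0 x, m0 x)) x t))
                                (w_of (lf_approx k B h l (\<lambda>x. (rho0 x, m0 x)) x t)) < l / (2 * h)) \<longrightarrow>
         (\<forall>x. \<forall>t\<in>{0..T}.
            0 \<le> w_of (lf_approx k B h l (\<lambda>x. (rho0 x, m0 x)) x t) \<and>
            w_of (lf_approx k B h l (\<lambda>x. (rho0 x, m0 x)) x t) \<le> P \<and>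
            - P \<le> z_of (lf_approx k B h l (\<lambda>x. (rho0 x, m0 x)) x t) \<and>
            z_of (lf_approx k B h l (\<lambda>x. (rho0 x, m0 x)) x t) \<le> - \<delta>0 * exp (- A * T))"
    proof (intro allI impI ballI)
      fix h l x t :: real assume h: "0 < h" "h \<le> h0" and l: "0 < l" and t: "t \<in> {0..T}"
      show "0 \<le> w_of (lf_approx k B h l (\<lambda>x. (rho0 x, m0 x)) x t) \<and>
            w_of (lf_approx k B h l (\<lambda>x. (rho0 x, m0 x)) x t) \<le> P \<and>
            - P \<le> z_of (lf_approx k B h l (\<lambda>x. (rho0 x, m0 x)) x t) \<and>
            z_of (lf_approx k B h l (\<lambda>x. (rho0 x, m0 x)) x t) \<le> - \<delta>0 * exp (- A * T)"
        using main_case[OF U _ _ _ bd K P0' P_def A_def h(1) _ l t, where x=x] h assms(3)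
        unfolding h0_def by simp
    qed
    show "\<exists>h0>0. \<exists>P>0. \<exists>A>0. \<forall>h l. 0 < h \<longrightarrow> h \<le> h0 \<longrightarrow> 0 < l \<longrightarrow> l / (2 * h) \<le> \<Lambda> \<longrightarrow>
         (\<forall>x. \<forall>t\<in>{0..T}. max (z_of (lf_approx k B h l (\<lambda>x. (rho0 x, m0 x)) x t))
                                (w_of (lf_approx k B h l (\<lambda>x. (rho0 x, m0 x)) x t)) < l / (2 * h)) \<longrightarrow>
         (\<forall>x. \<forall>t\<in>{0..T}.
            0 \<le> w_of (lf_approx k B h l (\<lambda>x. (rho0 x, m0 x)) x t) \<and>
            w_of (lf_approx k B h l (\<lambda>x. (rho0 x, m0 x)) x t) \<le> P \<and>
            - P \<le> z_of (lf_approx k B h l (\<lambda>x. (rho0 x, m0 x)) x t) \<and>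
            z_of (lf_approx k B h l (\<lambda>x. (rho0 x, m0 x)) x t) \<le> - \<delta>0 * exp (- A * T))"
      using main h0pos Ppos Apos by blast
  qed
qed

end
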